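(* Let $A$ be a binary matrix and let $U$ be a binary base of $A$ that is disjoint in rows. If, in addition, $A$ has the Unique base rows sums property, then $U$ spans (in the binary sense) every binary base of $A$, and thus $A$ has the Augmentation property for the binary rank.
   Context: For a binary $n\times m$ matrix $A$, $R_{binary}(A)$ is the least $k$ with $A=UV$, $U\in\{0,1\}^{n\times k}$, $V\in\{0,1\}^{k\times m}$, ordinary arithmetic; a decomposition with $k=R_{binary}(A)$ is an optimal binary decomposition. A set $X$ of $\{0,1\}$-vectors spans $y$ (binary sense) if $y=\sum_{x\in X}c_xx$ with $c_x\in\{0,1\}$, ordinary addition; it spans a set $Y$ if it spans each vector of $Y$. A binary base of $A$ is a set of $\{0,1\}$ column vectors spanning every column of $A$, of minimum cardinality among such spanning sets. A base is disjoint in rows if no two distinct vectors of it have a $1$ in the same coordinate. $A$ has the Unique base rows sums property if for every optimal binary decomposition $A=X\cdot Y$ there are no two disjoint nonempty sets of row indices $\{i_1,\dots,i_s\}$, $\{j_1,\dots,j_t\}$ with $y_{i_1}+\dots+y_{i_s}=y_{j_1}+\dots+y_{j_t}$ ($y_i$ the rows of $Y$). $A$ has the Augmentation property for the binary rank if for all binary column vectors $x_1,\dots,x_t$ with $R_{binary}(A|x_i)=R_{binary}(A)$ for all $i$, also $R_{binary}(A|x_1,\dots,x_t)=R_{binary}(A)$, where $(A|x_1,\dots,x_t)$ is $A$ with these columns appended. *)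

theory Defs
  imports "Jordan_Normal_Form.Matrix"
begin

text \<open>Binary matrices and vectors: entries in {0,1}, stored as natural numbers;
  products and sums are ordinary arithmetic over nat.\<close>

definition binary_mat :: "nat mat \<Rightarrow> bool" where
  "binary_mat A \<longleftrightarrow> (\<forall>i<dim_row A. \<forall>j<dim_col A. A $$ (i,j) \<in> {0,1})"

definition binary_vec :: "nat vec \<Rightarrow> bool" where
  "binary_vec v \<longleftrightarrow> (\<forall>i<dim_vec v. v $ i \<in> {0,1})"

definition binary_decomp :: "nat mat \<Rightarrow> nat \<Rightarrow> nat mat \<Rightarrow> nat mat \<Rightarrow> bool" where
  "binary_decomp A k U V \<longleftrightarrow>
     U \<in> carrier_mat (dim_row A) k \<and> V \<in> carrier_mat k (dim_col A) \<and>
     binary_mat U \<and> binary_mat V \<and> A = U * V"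

definition binary_rank :: "nat mat \<Rightarrow> nat" where
  "binary_rank A = (LEAST k. \<exists>U V. binary_decomp A k U V)"

definition optimal_binary_decomp :: "nat mat \<Rightarrow> nat mat \<Rightarrow> nat mat \<Rightarrow> bool" where
  "optimal_binary_decomp A U V \<longleftrightarrow> binary_decomp A (binary_rank A) U V"

definition bspans :: "nat vec set \<Rightarrow> nat vec \<Rightarrow> bool" where
  "bspans X y \<longleftrightarrow> (\<forall>x\<in>X. dim_vec x = dim_vec y) \<and>
     (\<exists>S\<subseteq>X. finite S \<and> (\<forall>i<dim_vec y. y $ i = (\<Sum>x\<in>S. x $ i)))"

definition bspans_set :: "nat vec set \<Rightarrow> nat vec set \<Rightarrow> bool" where
  "bspans_set X Y \<longleftrightarrow> (\<forall>y\<in>Y. bspans X y)"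

definition spanning_binary_set :: "nat mat \<Rightarrow> nat vec set \<Rightarrow> bool" where
  "spanning_binary_set A X \<longleftrightarrow> finite X \<and>
     (\<forall>x\<in>X. binary_vec x \<and> dim_vec x = dim_row A) \<and>
     (\<forall>j<dim_col A. bspans X (col A j))"

definition binary_base :: "nat mat \<Rightarrow> nat vec set \<Rightarrow> bool" where
  "binary_base A X \<longleftrightarrow> spanning_binary_set A X \<and>
     (\<forall>X'. spanning_binary_set A X' \<longrightarrow> card X \<le> card X')"

definition disjoint_in_rows :: "nat vec set \<Rightarrow> bool" where
  "disjoint_in_rows X \<longleftrightarrow>
     (\<forall>u\<in>X. \<forall>v\<in>X. u \<noteq> v \<longrightarrow> (\<forall>i<min (dim_vec u) (dim_vec v). \<not> (u $ i = 1 \<and> v $ i = 1)))"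

definition unique_base_rows_sums :: "nat mat \<Rightarrow> bool" where
  "unique_base_rows_sums A \<longleftrightarrow>
     (\<forall>X Y. optimal_binary_decomp A X Y \<longrightarrow>
        \<not> (\<exists>I J. I \<subseteq> {..<dim_row Y} \<and> J \<subseteq> {..<dim_row Y} \<and> I \<noteq> {} \<and> J \<noteq> {} \<and>
               I \<inter> J = {} \<and>
               (\<forall>c<dim_col Y. (\<Sum>i\<in>I. Y $$ (i,c)) = (\<Sum>j\<in>J. Y $$ (j,c)))))"

definition append_cols :: "nat mat \<Rightarrow> nat vec list \<Rightarrow> nat mat" where
  "append_cols A xs = mat (dim_row A) (dim_col A + length xs)
     (\<lambda>(i,j). if j < dim_col A then A $$ (i,j) else (xs ! (j - dim_col A)) $ i)"

definition augmentation_property :: "nat mat \<Rightarrow> bool" where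
  "augmentation_property A \<longleftrightarrow>
     (\<forall>xs. (\<forall>x\<in>set xs. binary_vec x \<and> dim_vec x = dim_row A \<and>
              binary_rank (append_cols A [x]) = binary_rank A) \<longrightarrow>
           binary_rank (append_cols A xs) = binary_rank A)"

end

theory Submission
  imports Defs
begin


definition Pc :: "nat vec set \<Rightarrow> nat \<Rightarrow> nat vec \<Rightarrow> bool" where
  "Pc U n y \<longleftrightarrow> (\<forall>u\<in>U. \<forall>i<n. \<forall>i'<n. u $ i = 1 \<and> u $ i' = 1 \<longrightarrow> y $ i = y $ i') \<and>
     (\<forall>i<n. (\<forall>u\<in>U. u $ i \<noteq> 1) \<longrightarrow> y $ i = 0)"

lemma bin_vec_cases: "binary_vec v \<Longrightarrow> i < dim_vec v \<Longrightarrow> v $ i = 0 \<or> v $ i = 1"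
  unfolding binary_vec_def by auto

lemma sum_at_supp:
  assumes dis: "disjoint_in_rows U" and UB: "\<forall>u\<in>U. binary_vec u \<and> dim_vec u = n"
    and R: "R \<subseteq> U" "finite R" and u0: "u0 \<in> U" "i < n" "u0 $ i = 1"
  shows "(\<Sum>u\<in>R. u $ i) = (if u0 \<in> R then 1 else 0)"
proof -
  have z: "\<forall>u\<in>R - {u0}. u $ i = 0"
  proof
    fix u assume u: "u \<in> R - {u0}"
    hence "u \<in> U" "u \<noteq> u0" using R by auto
    hence "\<not> (u $ i = 1 \<and> u0 $ i = 1)" using dis u0 UB unfolding disjoint_in_rows_def by auto
    hence "u $ i \<noteq> 1" using u0 by auto
    thus "u $ i = 0" using bin_vec_cases[of u i] UB \<open>u \<in> U\<close> u0 by auto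
  qed
  show ?thesis
  proof (cases "u0 \<in> R")
    case True
    have "(\<Sum>u\<in>R. u $ i) = u0 $ i + (\<Sum>u\<in>R - {u0}. u $ i)"
      using True R by (simp add: sum.remove)
    also have "(\<Sum>u\<in>R - {u0}. u $ i) = 0" using z by simp
    finally show ?thesis using True u0 by simp
  next
    case False
    hence "\<forall>u\<in>R. u $ i = 0" using z by auto
    thus ?thesis using False by simp
  qed
qed

lemma sum_outside:
  assumes UB: "\<forall>u\<in>U. binary_vec u \<and> dim_vec u = n"
    and R: "R \<subseteq> U" and i: "i < n" "\<forall>u\<in>U. u $ i \<noteq> 1"
  shows "(\<Sum>u\<in>R. u $ i) = 0"
proof -
  have "\<forall>u\<in>R. u $ i = 0"
  proof
    fix u assume "u \<in> R"
    hence "u \<in> U" using R by auto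
    thus "u $ i = 0" using UB i bin_vec_cases[of u i] by auto
  qed
  thus ?thesis by simp
qed

lemma Pc_of_span:
  assumes dis: "disjoint_in_rows U" and UB: "\<forall>u\<in>U. binary_vec u \<and> dim_vec u = n"
    and R: "R \<subseteq> U" "finite R" and y: "\<forall>i<n. y $ i = (\<Sum>u\<in>R. u $ i)"
  shows "Pc U n y"
  unfolding Pc_def
proof (intro conjI allI ballI impI)
  fix u i i' assume "u \<in> U" "i < n" "i' < n" "u $ i = 1 \<and> u $ i' = 1"
  thus "y $ i = y $ i'"
    using y sum_at_supp[OF dis UB R, of u i] sum_at_supp[OF dis UB R, of u i'] by auto
next
  fix i assume "i < n" "\<forall>u\<in>U. u $ i \<noteq> 1"
  thus "y $ i = 0" using y sum_outside[OF UB R(1)] by auto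
qed

lemma span_of_Pc:
  assumes dis: "disjoint_in_rows U" and UB: "\<forall>u\<in>U. binary_vec u \<and> dim_vec u = n"
    and fin: "finite U"
    and y: "binary_vec y" "dim_vec y = n" "Pc U n y"
  shows "bspans U y"
proof -
  define R where "R = {u\<in>U. \<exists>i<n. u $ i = 1 \<and> y $ i = 1}"
  have R: "R \<subseteq> U" "finite R" using fin unfolding R_def by auto
  have "\<forall>i<dim_vec y. y $ i = (\<Sum>x\<in>R. x $ i)"
  proof (intro allI impI)
    fix i assume i: "i < dim_vec y"
    show "y $ i = (\<Sum>x\<in>R. x $ i)"
    proof (cases "\<exists>u0\<in>U. u0 $ i = 1")
      case True
      then obtain u0 where u0: "u0 \<in> U" "u0 $ i = 1" by auto
      have s: "(\<Sum>x\<in>R. x $ i) = (if u0 \<in> R then 1 else 0)"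
        using sum_at_supp[OF dis UB R u0(1) _ u0(2)] i y by auto
      have "u0 \<in> R \<longleftrightarrow> y $ i = 1"
      proof
        assume "u0 \<in> R"
        then obtain i' where "i' < n" "u0 $ i' = 1" "y $ i' = 1" unfolding R_def by auto
        thus "y $ i = 1" using y(3) u0 i y(2) unfolding Pc_def by metis
      next
        assume "y $ i = 1" thus "u0 \<in> R" using u0 i y(2) unfolding R_def by auto
      qed
      thus ?thesis using s bin_vec_cases[OF y(1) i] by auto
    next
      case False
      hence "y $ i = 0" using y i unfolding Pc_def by auto
      thus ?thesis using sum_outside[OF UB R(1)] False i y(2) by auto
    qed
  qed
  thus ?thesis unfolding bspans_def using R UB y(2) by auto
qed

lemma Pc_sum:
  assumes S: "finite S" "\<forall>b\<in>S. Pc U n b" and y: "\<forall>i<n. y $ i = (\<Sum>b\<in>S. b $ i)"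
  shows "Pc U n y"
  unfolding Pc_def
proof (intro conjI allI ballI impI)
  fix u i i' assume h: "u \<in> U" "i < n" "i' < n" "u $ i = 1 \<and> u $ i' = 1"
  have "\<forall>b\<in>S. b $ i = b $ i'" using S(2) h unfolding Pc_def by blast
  thus "y $ i = y $ i'" using y h by simp
next
  fix i assume h: "i < n" "\<forall>u\<in>U. u $ i \<noteq> 1"
  have "\<forall>b\<in>S. b $ i = 0" using S(2) h unfolding Pc_def by blast
  thus "y $ i = 0" using y h by simp
qed



lemma sum_nth_distinct:
  assumes "distinct xs"
  shows "(\<Sum>l\<in>{0..<length xs}. f (xs ! l)) = (\<Sum>x\<in>set xs. f x)"
proof -
  have inj: "inj_on (nth xs) {0..<length xs}" using inj_on_nth[OF assms] by auto
  have im: "nth xs ` {0..<length xs} = set xs" using nth_image[of "length xs" xs] by simp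
  show ?thesis using sum.reindex[OF inj, of f] im by simp
qed

lemma decomp_from_span:
  assumes sp: "spanning_binary_set A X"
  obtains xs Sj where "distinct xs" "set xs = X" "length xs = card X"
    "\<forall>c<dim_col A. Sj c \<subseteq> X \<and> (\<forall>i<dim_row A. A $$ (i,c) = (\<Sum>x\<in>Sj c. x $ i))"
    "binary_decomp A (card X) (mat (dim_row A) (card X) (\<lambda>(i,l). xs ! l $ i))
        (mat (card X) (dim_col A) (\<lambda>(l,c). if xs ! l \<in> Sj c then 1 else 0))"
proof -
  let ?n = "dim_row A" and ?m = "dim_col A"
  have fin: "finite X" using sp unfolding spanning_binary_set_def by auto
  obtain xs where xs: "set xs = X" "distinct xs" using finite_distinct_list[OF fin] by auto
  have len: "length xs = card X" using xs distinct_card by metis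
  define Sj where "Sj c = (SOME S. S \<subseteq> X \<and> finite S \<and>
      (\<forall>i<dim_vec (col A c). col A c $ i = (\<Sum>x\<in>S. x $ i)))" for c
  have Sj: "Sj c \<subseteq> X \<and> (\<forall>i<?n. A $$ (i,c) = (\<Sum>x\<in>Sj c. x $ i))" if c: "c < ?m" for c
  proof -
    have "\<exists>S. S \<subseteq> X \<and> finite S \<and>
      (\<forall>i<dim_vec (col A c). col A c $ i = (\<Sum>x\<in>S. x $ i))"
      using sp c unfolding spanning_binary_set_def bspans_def by auto
    hence "Sj c \<subseteq> X \<and> finite (Sj c) \<and>
      (\<forall>i<dim_vec (col A c). col A c $ i = (\<Sum>x\<in>Sj c. x $ i))"
      unfolding Sj_def by (rule someI_ex)
    thus ?thesis using c by (simp add: index_col)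
  qed
  define U where "U = mat ?n (card X) (\<lambda>(i,l). xs ! l $ i)"
  define V where "V = mat (card X) ?m (\<lambda>(l,c). if xs ! l \<in> Sj c then (1::nat) else 0)"
  have XB: "\<forall>x\<in>X. binary_vec x \<and> dim_vec x = ?n" using sp unfolding spanning_binary_set_def by auto
  have bU: "binary_mat U" unfolding binary_mat_def U_def
  proof (intro allI impI)
    fix i j assume "i < dim_row (mat ?n (card X) (\<lambda>(i,l). xs ! l $ i))"
       "j < dim_col (mat ?n (card X) (\<lambda>(i,l). xs ! l $ i))"
    hence ij: "i < ?n" "j < card X" by auto
    hence "xs ! j \<in> X" using xs len by auto
    thus "mat ?n (card X) (\<lambda>(i,l). xs ! l $ i) $$ (i, j) \<in> {0, 1}"
      using ij XB unfolding binary_vec_def by auto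
  qed
  have bV: "binary_mat V" unfolding binary_mat_def V_def by auto
  have eq: "A = U * V"
  proof (rule eq_matI)
    show "dim_row A = dim_row (U * V)" "dim_col A = dim_col (U * V)" unfolding U_def V_def by auto
    fix i c assume ic: "i < dim_row (U * V)" "c < dim_col (U * V)"
    hence ic': "i < ?n" "c < ?m" unfolding U_def V_def by auto
    have "(U * V) $$ (i,c) = (\<Sum>l\<in>{0..<card X}. xs ! l $ i * (if xs ! l \<in> Sj c then 1 else 0))"
      using ic' unfolding U_def V_def by (simp add: scalar_prod_def row_def col_def)
    also have "\<dots> = (\<Sum>x\<in>X. x $ i * (if x \<in> Sj c then 1 else 0))"
      using sum_nth_distinct[OF xs(2), of "\<lambda>x. x $ i * (if x \<in> Sj c then 1 else 0)"] xs len by simp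
    also have "\<dots> = (\<Sum>x\<in>X. if x \<in> Sj c then x $ i else 0)" by (rule sum.cong) auto
    also have "\<dots> = (\<Sum>x\<in>X \<inter> Sj c. x $ i)" using fin by (simp add: sum.inter_restrict)
    also have "X \<inter> Sj c = Sj c" using Sj[OF ic'(2)] by auto
    finally show "A $$ (i,c) = (U * V) $$ (i,c)" using Sj[OF ic'(2)] ic'(1) by simp
  qed
  have "binary_decomp A (card X) U V"
    unfolding binary_decomp_def using eq bU bV unfolding U_def V_def by auto
  thus ?thesis using that[OF xs(2) xs(1) len] Sj unfolding U_def V_def by auto
qed

lemma span_from_decomp:
  assumes bA: "binary_mat A" and d: "binary_decomp A k U V"
  shows "\<exists>X. spanning_binary_set A X \<and> card X \<le> k"
proof -
  let ?n = "dim_row A" and ?m = "dim_col A"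
  have U: "U \<in> carrier_mat ?n k" and V: "V \<in> carrier_mat k ?m" and bU: "binary_mat U"
    and bV: "binary_mat V" and eq: "A = U * V" using d unfolding binary_decomp_def by auto
  define X where "X = (\<lambda>l. col U l) ` {..<k}"
  have "card X \<le> k" unfolding X_def using card_image_le[of "{..<k}"] by simp
  moreover have "spanning_binary_set A X"
    unfolding spanning_binary_set_def
  proof (intro conjI ballI allI impI)
    show "finite X" unfolding X_def by auto
  next
    fix x assume "x \<in> X"
    then obtain l where l: "l < k" "x = col U l" unfolding X_def by auto
    show "binary_vec x"
      using l U bU unfolding binary_vec_def binary_mat_def by (auto simp: index_col)
  next
    fix x assume "x \<in> X"
    then obtain l where l: "l < k" "x = col U l" unfolding X_def by auto
    show "dim_vec x = ?n"
      using l U by auto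
  next
    fix c assume c: "c < ?m"
    define L where "L = {l. l < k \<and> V $$ (l,c) = 1 \<and> col U l \<noteq> 0\<^sub>v ?n}"
    define S where "S = (\<lambda>l. col U l) ` L"
    have Vb: "V $$ (l,c) = 0 \<or> V $$ (l,c) = 1" if "l < k" for l
      using that c V bV unfolding binary_mat_def by auto
    have Ub: "U $$ (i,l) = 0 \<or> U $$ (i,l) = 1" if "i < ?n" "l < k" for i l
      using that U bU unfolding binary_mat_def by auto
    have Aij: "A $$ (i,c) = (\<Sum>l\<in>{0..<k}. U $$ (i,l) * V $$ (l,c))" if "i < ?n" for i
    proof -
      have d: "i < dim_row U" "c < dim_col V" using that c U V by auto
      have "A $$ (i,c) = (U * V) $$ (i,c)" using eq by simp
      also have "\<dots> = (\<Sum>l\<in>{0..<k}. U $$ (i,l) * V $$ (l,c))"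
        using d U V by (simp add: scalar_prod_def row_def col_def)
      finally show ?thesis .
    qed
    have inj: "inj_on (\<lambda>l. col U l) L"
    proof (rule inj_onI)
      fix l l' assume h: "l \<in> L" "l' \<in> L" "col U l = col U l'"
      show "l = l'"
      proof (rule ccontr)
        assume ne: "l \<noteq> l'"
        have "\<exists>i<?n. col U l $ i \<noteq> 0"
        proof (rule ccontr)
          assume "\<not> ?thesis"
          hence "col U l = 0\<^sub>v ?n" using U by (intro eq_vecI) auto
          thus False using h unfolding L_def by auto
        qed
        then obtain i where i0: "i < ?n" "col U l $ i \<noteq> 0" by blast
        have l: "l < k" "l' < k" using h unfolding L_def by auto
        have i: "i < ?n" "U $$ (i,l) \<noteq> 0" using i0 l U by auto
        have i1: "U $$ (i,l) = 1" using Ub[OF i(1) l(1)] i by auto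
        have e1: "col U l $ i = U $$ (i,l)" using i l U by simp
        have e2: "col U l' $ i = U $$ (i,l')" using i l U by simp
        have i2: "U $$ (i,l') = 1" using h(3) i1 e1 e2 by simp
        have "A $$ (i,c) \<ge> U $$ (i,l) * V $$ (l,c) + U $$ (i,l') * V $$ (l',c)"
        proof -
          have "(\<Sum>l\<in>{l,l'}. U $$ (i,l) * V $$ (l,c)) \<le> (\<Sum>l\<in>{0..<k}. U $$ (i,l) * V $$ (l,c))"
            using l by (intro sum_mono2) auto
          thus ?thesis using ne Aij[OF i(1)] by simp
        qed
        hence "A $$ (i,c) \<ge> 2" using i1 i2 h unfolding L_def by simp
        moreover have "A $$ (i,c) \<in> {0,1}" using bA i c unfolding binary_mat_def by auto
        ultimately show False by auto
      qed
    qed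
    show "bspans X (col A c)"
      unfolding bspans_def
    proof (intro conjI ballI exI[of _ S])
      fix x assume "x \<in> X" thus "dim_vec x = dim_vec (col A c)"
        unfolding X_def using U by auto
    next
      show "S \<subseteq> X" unfolding S_def X_def L_def by auto
      show "finite S" unfolding S_def L_def by auto
      show "\<forall>i<dim_vec (col A c). col A c $ i = (\<Sum>x\<in>S. x $ i)"
      proof (intro allI impI)
        fix i assume "i < dim_vec (col A c)"
        hence i: "i < ?n" by simp
        have "(\<Sum>x\<in>S. x $ i) = (\<Sum>l\<in>L. col U l $ i)"
          unfolding S_def using sum.reindex[OF inj, of "\<lambda>x. x $ i"] by simp
        also have "\<dots> = (\<Sum>l\<in>L. U $$ (i,l) * V $$ (l,c))"
          by (rule sum.cong) (use i U in \<open>auto simp: L_def index_col\<close>)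
        also have "\<dots> = (\<Sum>l\<in>{0..<k}. U $$ (i,l) * V $$ (l,c))"
        proof (rule sum.mono_neutral_left)
          show "finite {0..<k}" by simp
          show "L \<subseteq> {0..<k}" unfolding L_def by auto
          show "\<forall>l\<in>{0..<k} - L. U $$ (i,l) * V $$ (l,c) = 0"
          proof
            fix l assume l: "l \<in> {0..<k} - L"
            show "U $$ (i,l) * V $$ (l,c) = 0"
            proof (cases "V $$ (l,c) = 1")
              case True
              hence "col U l = 0\<^sub>v ?n" using l unfolding L_def by auto
              hence "col U l $ i = 0" using i by simp
              thus ?thesis using i l U by (simp add: index_col)
            next
              case False thus ?thesis using Vb[of l] l by auto
            qed
          qed
        qed
        finally show "col A c $ i = (\<Sum>x\<in>S. x $ i)" using Aij[OF i] i c by simp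
      qed
    qed
  qed
  ultimately show ?thesis by auto
qed

lemma rank_facts:
  assumes bA: "binary_mat A" and sp: "spanning_binary_set A X"
  shows "binary_rank A \<le> card X"
    and "\<exists>U V. binary_decomp A (binary_rank A) U V"
    and "\<exists>X'. spanning_binary_set A X' \<and> card X' \<le> binary_rank A"
proof -
  obtain xs Sj U V where "binary_decomp A (card X) U V"
    using decomp_from_span[OF sp] by metis
  hence ex: "\<exists>U V. binary_decomp A (card X) U V" by auto
  show "binary_rank A \<le> card X" unfolding binary_rank_def by (rule Least_le) (rule ex)
  show ex2: "\<exists>U V. binary_decomp A (binary_rank A) U V"
    unfolding binary_rank_def by (rule LeastI) (rule ex)
  then obtain U V where "binary_decomp A (binary_rank A) U V" by auto
  thus "\<exists>X'. spanning_binary_set A X' \<and> card X' \<le> binary_rank A"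
    using span_from_decomp[OF bA] by auto
qed

lemma base_card:
  assumes bA: "binary_mat A" and B: "binary_base A B"
  shows "card B = binary_rank A"
proof -
  have sp: "spanning_binary_set A B" using B unfolding binary_base_def by auto
  obtain X' where "spanning_binary_set A X'" "card X' \<le> binary_rank A"
    using rank_facts(3)[OF bA sp] by auto
  hence "card B \<le> binary_rank A" using B unfolding binary_base_def by force
  thus ?thesis using rank_facts(1)[OF bA sp] by simp
qed



lemma part1:
  assumes bA: "binary_mat A" and Ub: "binary_base A U" and dis: "disjoint_in_rows U"
    and uniq: "unique_base_rows_sums A" and Bb: "binary_base A B" and b: "b \<in> B"
  shows "Pc U (dim_row A) b"
proof -
  let ?n = "dim_row A" and ?m = "dim_col A"
  have spB: "spanning_binary_set A B" using Bb unfolding binary_base_def by auto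
  have spU: "spanning_binary_set A U" using Ub unfolding binary_base_def by auto
  have UB: "\<forall>u\<in>U. binary_vec u \<and> dim_vec u = ?n" and finU: "finite U"
    using spU unfolding spanning_binary_set_def by auto
  have BB: "\<forall>x\<in>B. binary_vec x \<and> dim_vec x = ?n" and finB: "finite B"
    using spB unfolding spanning_binary_set_def by auto
  have kB: "card B = binary_rank A" using base_card[OF bA Bb] .
  obtain xs Sj where xs: "distinct xs" "set xs = B" "length xs = card B"
    and Sj: "\<forall>c<?m. Sj c \<subseteq> B \<and> (\<forall>i<?n. A $$ (i,c) = (\<Sum>x\<in>Sj c. x $ i))"
    and dec: "binary_decomp A (card B) (mat ?n (card B) (\<lambda>(i,l). xs ! l $ i))
        (mat (card B) ?m (\<lambda>(l,c). if xs ! l \<in> Sj c then 1 else 0))"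
    using decomp_from_span[OF spB] by metis
  define k where "k = card B"
  define Xm where "Xm = mat ?n k (\<lambda>(i,l). xs ! l $ i)"
  define Ym where "Ym = mat k ?m (\<lambda>(l,c). if xs ! l \<in> Sj c then (1::nat) else 0)"
  have opt: "optimal_binary_decomp A Xm Ym"
    unfolding optimal_binary_decomp_def Xm_def Ym_def k_def using dec kB by simp
  have eqA: "A = Xm * Ym" using dec unfolding binary_decomp_def Xm_def Ym_def k_def by auto
  obtain l where l: "l < k" "b = xs ! l" using b xs unfolding k_def by (metis in_set_conv_nth)
  have xsB: "xs ! l' \<in> B" if "l' < k" for l' using that xs unfolding k_def by auto
  have xsbin: "xs ! l' $ i = 0 \<or> xs ! l' $ i = 1" if "l' < k" "i < ?n" for l' i
    using xsB[OF that(1)] BB that(2) bin_vec_cases by metis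
  define Srow where "Srow i = {l'. l' < k \<and> xs ! l' $ i = 1}" for i
  have rowA: "A $$ (i,c) = (\<Sum>l'\<in>Srow i. Ym $$ (l',c))" if i: "i < ?n" and c: "c < ?m" for i c
  proof -
    have "A $$ (i,c) = (Xm * Ym) $$ (i,c)" using eqA by simp
    also have "\<dots> = (\<Sum>l'\<in>{0..<k}. xs ! l' $ i * Ym $$ (l',c))"
      using i c unfolding Xm_def Ym_def by (simp add: scalar_prod_def row_def col_def)
    also have "\<dots> = (\<Sum>l'\<in>{0..<k}. if xs ! l' $ i = 1 then Ym $$ (l',c) else 0)"
      by (rule sum.cong) (use xsbin i in auto)
    also have "\<dots> = (\<Sum>l'\<in>Srow i. Ym $$ (l',c))"
      unfolding Srow_def by (simp add: sum.inter_filter[symmetric] atLeast0LessThan)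
    finally show ?thesis .
  qed
  have nz: "\<exists>c<?m. Ym $$ (l',c) \<noteq> 0" if l': "l' < k" for l'
  proof (rule ccontr)
    assume "\<not> ?thesis"
    hence nin: "\<forall>c<?m. xs ! l' \<notin> Sj c" using l' unfolding Ym_def by auto
    let ?B' = "B - {xs ! l'}"
    have "spanning_binary_set A ?B'"
      unfolding spanning_binary_set_def
    proof (intro conjI allI impI ballI)
      show "finite ?B'" using finB by auto
    next
      fix x assume "x \<in> ?B'" thus "binary_vec x" "dim_vec x = ?n" using BB by auto
    next
      fix c assume c: "c < ?m"
      show "bspans ?B' (col A c)" unfolding bspans_def
      proof (intro conjI ballI exI[of _ "Sj c"])
        fix x assume "x \<in> ?B'" thus "dim_vec x = dim_vec (col A c)" using BB by auto
      next
        show "Sj c \<subseteq> ?B'" using Sj nin c by auto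
        show "finite (Sj c)" using Sj c finB finite_subset by blast
        show "\<forall>i<dim_vec (col A c). col A c $ i = (\<Sum>x\<in>Sj c. x $ i)"
          using Sj c by auto
      qed
    qed
    hence "card B \<le> card ?B'" using Bb unfolding binary_base_def by auto
    moreover have "card ?B' < card B" using xsB[OF l'] finB by (meson card_Diff1_less)
    ultimately show False by simp
  qed
  have zero: "T = {}" if T: "T \<subseteq> {..<k}" "\<forall>c<?m. (\<Sum>l'\<in>T. Ym $$ (l',c)) = 0" for T
  proof (rule ccontr)
    assume "T \<noteq> {}"
    then obtain l' where l': "l' \<in> T" by auto
    hence lk: "l' < k" using T by auto
    obtain c where c: "c < ?m" "Ym $$ (l',c) \<noteq> 0" using nz[OF lk] by auto
    have "finite T" using T finite_subset by blast
    hence "Ym $$ (l',c) = 0" using T(2) c l' by simp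
    thus False using c by simp
  qed
  have PcA: "Pc U ?n (col A c)" if c: "c < ?m" for c
  proof -
    obtain R where R: "R \<subseteq> U" "finite R" "\<forall>i<dim_vec (col A c). col A c $ i = (\<Sum>x\<in>R. x $ i)"
      using spU c unfolding spanning_binary_set_def bspans_def by blast
    show ?thesis using Pc_of_span[OF dis UB R(1,2)] R(3) by simp
  qed
  have Aval: "A $$ (i,c) = col A c $ i" if "i < ?n" "c < ?m" for i c using that by simp
  have bbin: "b $ i = 0 \<or> b $ i = 1" if "i < ?n" for i using xsbin[OF l(1) that] l by simp
  have bS: "b $ i = 1 \<longleftrightarrow> l \<in> Srow i" for i using l unfolding Srow_def by auto
  have SrowK: "Srow i \<subseteq> {..<k}" for i unfolding Srow_def by auto
  show ?thesis unfolding Pc_def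
  proof (intro conjI ballI allI impI)
    fix i assume i: "i < ?n" and no: "\<forall>u\<in>U. u $ i \<noteq> 1"
    have "\<forall>c<?m. (\<Sum>l'\<in>Srow i. Ym $$ (l',c)) = 0"
    proof (intro allI impI)
      fix c assume c: "c < ?m"
      have "col A c $ i = 0" using PcA[OF c] i no unfolding Pc_def by auto
      thus "(\<Sum>l'\<in>Srow i. Ym $$ (l',c)) = 0" using rowA[OF i c] Aval[OF i c] by simp
    qed
    hence "Srow i = {}" using zero[OF SrowK] by blast
    thus "b $ i = 0" using bS[of i] bbin[OF i] by auto
  next
    fix u0 i i' assume u0: "u0 \<in> U" and ii: "i < ?n" "i' < ?n" "u0 $ i = 1 \<and> u0 $ i' = 1"
    have eqs: "(\<Sum>l'\<in>Srow i. Ym $$ (l',c)) = (\<Sum>l'\<in>Srow i'. Ym $$ (l',c))" if c: "c < ?m" for c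
    proof -
      have "col A c $ i = col A c $ i'" using PcA[OF c] u0 ii unfolding Pc_def by blast
      thus ?thesis using rowA[OF ii(1) c] rowA[OF ii(2) c] Aval[OF ii(1) c] Aval[OF ii(2) c] by simp
    qed
    define I where "I = Srow i - Srow i'"
    define J where "J = Srow i' - Srow i"
    define C where "C = Srow i \<inter> Srow i'"
    have fin: "finite (Srow j)" for j using SrowK[of j] finite_subset by blast
    have IJ: "(\<Sum>l'\<in>I. Ym $$ (l',c)) = (\<Sum>l'\<in>J. Ym $$ (l',c))" if c: "c < ?m" for c
    proof -
      have s1: "(\<Sum>l'\<in>Srow i. Ym $$ (l',c)) = (\<Sum>l'\<in>I. Ym $$ (l',c)) + (\<Sum>l'\<in>C. Ym $$ (l',c))"
      proof -
        have "Srow i = I \<union> C" "I \<inter> C = {}" unfolding I_def C_def by auto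
        thus ?thesis using fin[of i] by (simp add: sum.union_disjoint)
      qed
      have s2: "(\<Sum>l'\<in>Srow i'. Ym $$ (l',c)) = (\<Sum>l'\<in>J. Ym $$ (l',c)) + (\<Sum>l'\<in>C. Ym $$ (l',c))"
      proof -
        have "Srow i' = J \<union> C" "J \<inter> C = {}" unfolding J_def C_def by auto
        thus ?thesis using fin[of i'] by (simp add: sum.union_disjoint)
      qed
      show ?thesis using s1 s2 eqs[OF c] by simp
    qed
    have IK: "I \<subseteq> {..<k}" "J \<subseteq> {..<k}" using SrowK unfolding I_def J_def by blast+
    have "I = {} \<and> J = {}"
    proof (cases "I = {}")
      case True
      hence "\<forall>c<?m. (\<Sum>l'\<in>J. Ym $$ (l',c)) = 0" using IJ by (metis sum.empty)
      thus ?thesis using zero[OF IK(2)] True by blast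
    next
      case False
      show ?thesis
      proof (cases "J = {}")
        case True
        hence "\<forall>c<?m. (\<Sum>l'\<in>I. Ym $$ (l',c)) = 0" using IJ by (metis sum.empty)
        thus ?thesis using zero[OF IK(1)] True by blast
      next
        case Jne: False
        have dY: "dim_row Ym = k" "dim_col Ym = ?m" unfolding Ym_def by auto
        have "\<exists>I J. I \<subseteq> {..<dim_row Ym} \<and> J \<subseteq> {..<dim_row Ym} \<and> I \<noteq> {} \<and> J \<noteq> {} \<and>
               I \<inter> J = {} \<and>
               (\<forall>c<dim_col Ym. (\<Sum>i\<in>I. Ym $$ (i,c)) = (\<Sum>j\<in>J. Ym $$ (j,c)))"
          apply (rule exI[of _ I], rule exI[of _ J])
          using IK False Jne IJ dY unfolding I_def J_def by auto
        hence False using uniq opt unfolding unique_base_rows_sums_def by blast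
        thus ?thesis ..
      qed
    qed
    hence "Srow i = Srow i'" unfolding I_def J_def by blast
    hence "b $ i = 1 \<longleftrightarrow> b $ i' = 1" using bS by simp
    thus "b $ i = b $ i'" using bbin[OF ii(1)] bbin[OF ii(2)] by auto
  qed
qed



lemma append_cols_facts:
  shows "dim_row (append_cols A xs) = dim_row A"
    and "dim_col (append_cols A xs) = dim_col A + length xs"
    and "i < dim_row A \<Longrightarrow> j < dim_col A \<Longrightarrow> append_cols A xs $$ (i,j) = A $$ (i,j)"
    and "i < dim_row A \<Longrightarrow> p < length xs \<Longrightarrow> append_cols A xs $$ (i, dim_col A + p) = xs ! p $ i"
  unfolding append_cols_def by auto

lemma col_append_old: "j < dim_col A \<Longrightarrow> col (append_cols A xs) j = col A j"
  by (rule eq_vecI) (auto simp: append_cols_facts)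

lemma col_append_new: "p < length xs \<Longrightarrow> dim_vec (xs ! p) = dim_row A \<Longrightarrow>
    col (append_cols A xs) (dim_col A + p) = xs ! p"
  by (rule eq_vecI) (auto simp: append_cols_facts)

lemma binary_append:
  assumes "binary_mat A" "\<forall>x\<in>set xs. binary_vec x \<and> dim_vec x = dim_row A"
  shows "binary_mat (append_cols A xs)"
  unfolding binary_mat_def
proof (intro allI impI)
  fix i j assume i: "i < dim_row (append_cols A xs)" and j: "j < dim_col (append_cols A xs)"
  show "append_cols A xs $$ (i, j) \<in> {0, 1}"
  proof (cases "j < dim_col A")
    case True thus ?thesis using assms(1) i unfolding binary_mat_def by (simp add: append_cols_facts)
  next
    case False
    then obtain p where p: "j = dim_col A + p" by (metis le_add_diff_inverse not_less)
    have pl: "p < length xs" using j p by (simp add: append_cols_facts)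
    hence "xs ! p \<in> set xs" by simp
    thus ?thesis using assms(2) i p pl unfolding binary_vec_def by (simp add: append_cols_facts)
  qed
qed

theorem mainTheorem17:
  fixes A :: "nat mat" and U :: "nat vec set"
  assumes "binary_mat A"
    and "binary_base A U"
    and "disjoint_in_rows U"
    and "unique_base_rows_sums A"
  shows "(\<forall>B. binary_base A B \<longrightarrow> bspans_set U B) \<and> augmentation_property A"
proof -
  note bA = assms(1) and Ub = assms(2) and dis = assms(3) and uniq = assms(4)
  let ?n = "dim_row A" and ?m = "dim_col A"
  have spU: "spanning_binary_set A U" using Ub unfolding binary_base_def by auto
  have UB: "\<forall>u\<in>U. binary_vec u \<and> dim_vec u = ?n" and finU: "finite U"
    using spU unfolding spanning_binary_set_def by auto
  have kU: "card U = binary_rank A" using base_card[OF bA Ub] .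
  have P1: "bspans_set U B" if B: "binary_base A B" for B
    unfolding bspans_set_def
  proof
    fix b assume b: "b \<in> B"
    have "binary_vec b" "dim_vec b = ?n" using B b unfolding binary_base_def spanning_binary_set_def by auto
    thus "bspans U b" using span_of_Pc[OF dis UB finU] part1[OF bA Ub dis uniq B b] by auto
  qed
  have P2: "augmentation_property A"
    unfolding augmentation_property_def
  proof (intro allI impI)
    fix xs assume H: "\<forall>x\<in>set xs. binary_vec x \<and> dim_vec x = ?n \<and>
              binary_rank (append_cols A [x]) = binary_rank A"
    have spx: "bspans U x" if x: "x \<in> set xs" for x
    proof -
      let ?A1 = "append_cols A [x]"
      have xb: "binary_vec x" "dim_vec x = ?n" and r1: "binary_rank ?A1 = binary_rank A" using H x by auto
      have bA1: "binary_mat ?A1" using binary_append[OF bA] xb by auto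
      have d1: "dim_row ?A1 = ?n" "dim_col ?A1 = ?m + 1" by (simp_all add: append_cols_facts)
      have cx: "col ?A1 ?m = x" using col_append_new[of 0 "[x]" A] xb by simp
      have sp1: "spanning_binary_set ?A1 (insert x U)"
        unfolding spanning_binary_set_def
      proof (intro conjI allI impI ballI)
        show "finite (insert x U)" using finU by simp
      next
        fix y assume "y \<in> insert x U" thus "binary_vec y" "dim_vec y = dim_row ?A1" using UB xb d1 by auto
      next
        fix c assume c: "c < dim_col ?A1"
        show "bspans (insert x U) (col ?A1 c)"
        proof (cases "c < ?m")
          case True
          hence "bspans U (col A c)" using spU unfolding spanning_binary_set_def by auto
          then obtain S where "S \<subseteq> U" "finite S" "\<forall>i<dim_vec (col A c). col A c $ i = (\<Sum>x\<in>S. x $ i)"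
            unfolding bspans_def by auto
          thus ?thesis unfolding bspans_def using col_append_old[OF True] UB xb
            by (intro conjI exI[of _ S]) auto
        next
          case False
          hence "c = ?m" using c d1 by simp
          thus ?thesis unfolding bspans_def using cx UB xb
            by (intro conjI exI[of _ "{x}"]) auto
        qed
      qed
      obtain X1 where X1: "spanning_binary_set ?A1 X1" "card X1 \<le> binary_rank ?A1"
        using rank_facts(3)[OF bA1 sp1] by auto
      have spA: "spanning_binary_set A X1"
        unfolding spanning_binary_set_def
      proof (intro conjI allI impI)
        show "finite X1" "\<forall>x\<in>X1. binary_vec x \<and> dim_vec x = ?n"
          using X1(1) d1 unfolding spanning_binary_set_def by auto
        fix j assume j: "j < ?m"
        have "bspans X1 (col ?A1 j)" using X1(1) j d1 unfolding spanning_binary_set_def by auto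
        thus "bspans X1 (col A j)" using col_append_old[OF j, of "[x]"] by simp
      qed
      have baseX1: "binary_base A X1"
        unfolding binary_base_def using spA X1(2) r1 kU Ub unfolding binary_base_def by auto
      have "bspans X1 x" using X1(1) cx d1 unfolding spanning_binary_set_def by (metis less_add_one)
      then obtain S where S: "S \<subseteq> X1" "finite S" "\<forall>i<dim_vec x. x $ i = (\<Sum>b\<in>S. b $ i)"
        unfolding bspans_def by auto
      have "\<forall>b\<in>S. Pc U ?n b" using part1[OF bA Ub dis uniq baseX1] S by auto
      hence "Pc U ?n x" using Pc_sum[OF S(2)] S(3) xb by auto
      thus "bspans U x" using span_of_Pc[OF dis UB finU xb] by auto
    qed
    let ?A' = "append_cols A xs"
    have xsb: "\<forall>x\<in>set xs. binary_vec x \<and> dim_vec x = ?n" using H by auto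
    have bA': "binary_mat ?A'" using binary_append[OF bA xsb] .
    have spU': "spanning_binary_set ?A' U"
      unfolding spanning_binary_set_def
    proof (intro conjI allI impI ballI)
      show "finite U" using finU .
    next
      fix y assume "y \<in> U" thus "binary_vec y" "dim_vec y = dim_row ?A'" using UB by (auto simp: append_cols_facts)
    next
      fix c assume c: "c < dim_col ?A'"
      show "bspans U (col ?A' c)"
      proof (cases "c < ?m")
        case True
        thus ?thesis using col_append_old[OF True] spU unfolding spanning_binary_set_def by auto
      next
        case False
        then obtain p where p: "c = ?m + p" by (metis le_add_diff_inverse not_less)
        have pl: "p < length xs" using c p by (simp add: append_cols_facts)
        hence xin: "xs ! p \<in> set xs" by simp
        have "col ?A' c = xs ! p" using col_append_new[OF pl] xsb xin p by auto
        thus ?thesis using spx[OF xin] by simp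
      qed
    qed
    have le1: "binary_rank ?A' \<le> binary_rank A" using rank_facts(1)[OF bA' spU'] kU by simp
    obtain U' V' where d': "binary_decomp ?A' (binary_rank ?A') U' V'"
      using rank_facts(2)[OF bA' spU'] by auto
    define r where "r = binary_rank ?A'"
    have U': "U' \<in> carrier_mat ?n r" and V': "V' \<in> carrier_mat r (?m + length xs)"
      and bU': "binary_mat U'" and bV': "binary_mat V'" and eq': "?A' = U' * V'"
      using d' unfolding binary_decomp_def r_def by (auto simp: append_cols_facts)
    define V where "V = mat r ?m (\<lambda>(l,c). V' $$ (l,c))"
    have "binary_decomp A r U' V"
      unfolding binary_decomp_def
    proof (intro conjI)
      show "U' \<in> carrier_mat ?n r" by (rule U')
      show "V \<in> carrier_mat r ?m" unfolding V_def by simp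
      show "binary_mat U'" by (rule bU')
      show "binary_mat V" using bV' V' unfolding binary_mat_def V_def by auto
      show "A = U' * V"
      proof (rule eq_matI)
        show "dim_row A = dim_row (U' * V)" "dim_col A = dim_col (U' * V)" using U' unfolding V_def by auto
        fix i c assume "i < dim_row (U' * V)" "c < dim_col (U' * V)"
        hence ic: "i < ?n" "c < ?m" using U' unfolding V_def by auto
        have dd: "i < dim_row U'" "c < dim_col V'" "c < dim_col V" using ic U' V' unfolding V_def by auto
        have "A $$ (i,c) = ?A' $$ (i,c)" using ic by (simp add: append_cols_facts)
        also have "\<dots> = (U' * V') $$ (i,c)" using eq' by simp
        also have "\<dots> = (\<Sum>l\<in>{0..<r}. U' $$ (i,l) * V' $$ (l,c))"
          using dd U' V' by (simp add: scalar_prod_def row_def col_def)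
        also have "\<dots> = (U' * V) $$ (i,c)"
          using dd U' V' unfolding V_def by (simp add: scalar_prod_def row_def col_def)
        finally show "A $$ (i,c) = (U' * V) $$ (i,c)" .
      qed
    qed
    hence "\<exists>U V. binary_decomp A r U V" by blast
    hence "binary_rank A \<le> r" unfolding binary_rank_def by (rule Least_le)
    thus "binary_rank ?A' = binary_rank A" using le1 unfolding r_def by simp
  qed
  show ?thesis using P1 P2 by auto
qed

end
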